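(* Let $R$ be a commutative Noetherian ring, $n$ a non-negative integer and $L$ an $R$-module which is in dimension $<n$. Then the set $\{\mathfrak p\in\operatorname{Ass}_R L:\dim R/\mathfrak p\ge n\}$ is finite.
   Context: For an $R$-module $L$, $\dim\operatorname{Supp}L=\sup\{\dim R/\mathfrak p:\mathfrak p\in\operatorname{Supp}L\}$, the zero module having dimension $-\infty$. An $R$-module $L$ is "in dimension $<n$" if there is a finitely generated submodule $N\subseteq L$ with $\dim\operatorname{Supp}(L/N)<n$. *)

theory Defs
  imports Main "HOL-Library.Extended_Real"
begin

definition is_ideal :: "'a::comm_ring_1 set \<Rightarrow> bool" where
  "is_ideal I \<longleftrightarrow> 0 \<in> I \<and> (\<forall>x\<in>I. \<forall>y\<in>I. x + y \<in> I) \<and> (\<forall>r. \<forall>x\<in>I. r * x \<in> I)"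

definition prime_ideal :: "'a::comm_ring_1 set \<Rightarrow> bool" where
  "prime_ideal P \<longleftrightarrow> is_ideal P \<and> P \<noteq> UNIV \<and> (\<forall>a b. a * b \<in> P \<longrightarrow> a \<in> P \<or> b \<in> P)"

definition noetherian_cring :: "'a::comm_ring_1 itself \<Rightarrow> bool" where
  "noetherian_cring (_::'a itself) \<longleftrightarrow>
     (\<forall>C :: nat \<Rightarrow> 'a set. (\<forall>i. is_ideal (C i)) \<and> (\<forall>i. C i \<subseteq> C (Suc i))
        \<longrightarrow> (\<exists>m. \<forall>k\<ge>m. C k = C m))"

text \<open>Krull dimension of R/p: supremum of lengths of chains of prime ideals
  p = p_0 \<subset> p_1 \<subset> ... \<subset> p_k (primes of R/p correspond to primes containing p).\<close>
definition dim_quot :: "'a::comm_ring_1 set \<Rightarrow> enat" where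
  "dim_quot p = Sup {enat k | k. \<exists>c :: nat \<Rightarrow> 'a set. c 0 = p \<and>
      (\<forall>i\<le>k. prime_ideal (c i)) \<and> (\<forall>i<k. c i \<subset> c (Suc i))}"

text \<open>Support of the quotient module L/N: primes p with (L/N)_p \<noteq> 0, i.e. some
  x whose class does not vanish after localising at p.\<close>
definition supp_quot :: "('a::comm_ring_1 \<Rightarrow> 'b::ab_group_add \<Rightarrow> 'b) \<Rightarrow> 'b set \<Rightarrow> 'a set set" where
  "supp_quot scale N = {p. prime_ideal p \<and> (\<exists>x. \<forall>s. s \<notin> p \<longrightarrow> scale s x \<notin> N)}"

text \<open>dim Supp, with the empty support having dimension -\<infinity>.\<close>
definition dim_supp :: "'a::comm_ring_1 set set \<Rightarrow> ereal" where
  "dim_supp S = Sup ((\<lambda>p. ereal_of_enat (dim_quot p)) ` S)"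

definition Ass :: "('a::comm_ring_1 \<Rightarrow> 'b::ab_group_add \<Rightarrow> 'b) \<Rightarrow> 'a set set" where
  "Ass scale = {p. prime_ideal p \<and> (\<exists>x. p = {r. scale r x = 0})}"

definition in_dim_less :: "('a::comm_ring_1 \<Rightarrow> 'b::ab_group_add \<Rightarrow> 'b) \<Rightarrow> nat \<Rightarrow> bool" where
  "in_dim_less scale n \<longleftrightarrow>
     (\<exists>F. finite F \<and> dim_supp (supp_quot scale (module.span scale F)) < ereal (real n))"

end

theory Submission
  imports Defs
begin

definition AssQ :: "'a::comm_ring_1 set \<Rightarrow> 'a set set" where
  "AssQ I = {p. prime_ideal p \<and> (\<exists>c. p = {r. r * c \<in> I})}"

lemma ideal_colon: "is_ideal J \<Longrightarrow> is_ideal {r. r * c \<in> J}"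
  unfolding is_ideal_def by (auto simp: distrib_right mult.assoc)

lemma noeth_max:
  assumes N: "noetherian_cring TYPE('a::comm_ring_1)"
    and ne: "S \<noteq> {}" and id: "\<forall>J\<in>S. is_ideal (J::'a set)"
  shows "\<exists>M\<in>S. \<forall>J\<in>S. M \<subseteq> J \<longrightarrow> J = M"
proof (rule ccontr)
  assume "\<not> ?thesis"
  hence h: "\<forall>M\<in>S. \<exists>J. J \<in> S \<and> M \<subset> J" by blast
  from bchoice[OF h] obtain f where f0: "\<forall>M\<in>S. f M \<in> S \<and> M \<subset> f M" by (elim exE)
  hence f: "\<And>M. M \<in> S \<Longrightarrow> f M \<in> S \<and> M \<subset> f M" by blast
  obtain J0 where J0: "J0 \<in> S" using ne by blast
  define C where "C i = (f ^^ i) J0" for i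
  have CS: "C i \<in> S" for i
  proof (induction i)
    case 0 show ?case using J0 by (simp add: C_def)
  next
    case (Suc i) thus ?case using f[of "C i"] by (simp add: C_def)
  qed
  have Csuc: "C i \<subset> C (Suc i)" for i using f[OF CS[of i]] by (simp add: C_def)
  have ac: "\<forall>C :: nat \<Rightarrow> 'a set. (\<forall>i. is_ideal (C i)) \<and> (\<forall>i. C i \<subseteq> C (Suc i))
        \<longrightarrow> (\<exists>m. \<forall>k\<ge>m. C k = C m)" using N unfolding noetherian_cring_def .
  have "(\<forall>i. is_ideal (C i)) \<and> (\<forall>i. C i \<subseteq> C (Suc i))" using CS id Csuc by blast
  hence "\<exists>m. \<forall>k\<ge>m. C k = C m" using ac by (rule_tac mp[OF spec[OF ac]])
  then obtain m where "\<forall>k\<ge>m. C k = C m" by (elim exE)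
  hence "C (Suc m) = C m" by (meson le_SucI order_refl)
  with Csuc[of m] show False by simp
qed

lemma idl_mult: "is_ideal I \<Longrightarrow> x \<in> I \<Longrightarrow> r * x \<in> I"
  unfolding is_ideal_def by blast
lemma idl_add: "is_ideal I \<Longrightarrow> x \<in> I \<Longrightarrow> y \<in> I \<Longrightarrow> x + y \<in> I"
  unfolding is_ideal_def by blast
lemma idl_0: "is_ideal I \<Longrightarrow> 0 \<in> I"
  unfolding is_ideal_def by blast

lemma prime_colon:
  assumes p: "prime_ideal p" and r: "r \<notin> p"
  shows "{t. t * r \<in> p} = p"
proof -
  have i: "is_ideal p" using p prime_ideal_def by blast
  have "t * r \<in> p \<longleftrightarrow> t \<in> p" for t
    using p r idl_mult[OF i, of t r] unfolding prime_ideal_def by (metis mult.commute)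
  thus ?thesis by blast
qed

lemma AssQ_finite:
  assumes N: "noetherian_cring TYPE('a::comm_ring_1)"
  shows "is_ideal (I::'a set) \<Longrightarrow> finite (AssQ I)"
proof (rule ccontr)
  assume I: "is_ideal I" and inf: "infinite (AssQ I)"
  define S where "S = {J::'a set. is_ideal J \<and> infinite (AssQ J)}"
  have "I \<in> S" using I inf S_def by blast
  hence "S \<noteq> {}" by blast
  moreover have "\<forall>J\<in>S. is_ideal J" using S_def by blast
  ultimately obtain M where MS: "M \<in> S" and Mmax: "\<forall>J\<in>S. M \<subseteq> J \<longrightarrow> J = M"
    using noeth_max[OF N, of S] by blast
  have Mi: "is_ideal M" and Minf: "infinite (AssQ M)" using MS S_def by auto
  have "M \<noteq> UNIV"
  proof
    assume "M = UNIV"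
    hence "{r. r * c \<in> M} = UNIV" for c by simp
    hence "AssQ M = {}" unfolding AssQ_def prime_ideal_def by blast
    with Minf show False by simp
  qed
  then obtain y0 where y0: "y0 \<notin> M" by blast
  define T where "T = {{r. r * y \<in> M} | y. y \<notin> M}"
  have "T \<noteq> {}" using y0 T_def by blast
  moreover have "\<forall>J\<in>T. is_ideal J" using ideal_colon[OF Mi] T_def by auto
  ultimately obtain q where qT: "q \<in> T" and qmax: "\<forall>J\<in>T. q \<subseteq> J \<longrightarrow> J = q"
    using noeth_max[OF N, of T] by blast
  then obtain c where c: "c \<notin> M" and qdef: "q = {r. r * c \<in> M}" using T_def by blast
  have qi: "is_ideal q" using ideal_colon[OF Mi] qdef by simp
  have qprime: "prime_ideal q"
    unfolding prime_ideal_def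
  proof (intro conjI allI impI qi)
    have "1 \<notin> q" using c qdef by simp
    thus "q \<noteq> UNIV" by blast
  next
    fix a b assume ab: "a * b \<in> q"
    show "a \<in> q \<or> b \<in> q"
    proof (rule ccontr)
      assume "\<not> (a \<in> q \<or> b \<in> q)"
      hence a: "a \<notin> q" and b: "b \<notin> q" by auto
      have acM: "a * c \<notin> M" using a qdef by simp
      have "{r. r * (a * c) \<in> M} \<in> T" using acM T_def by blast
      moreover have "q \<subseteq> {r. r * (a * c) \<in> M}"
      proof
        fix r assume "r \<in> q"
        hence "r * c \<in> M" using qdef by simp
        hence "a * (r * c) \<in> M" using Mi unfolding is_ideal_def by blast
        thus "r \<in> {r. r * (a * c) \<in> M}" by (simp add: ac_simps)
      qed
      ultimately have eq: "{r. r * (a * c) \<in> M} = q" using qmax by blast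
      have "b * (a * c) \<in> M" using ab qdef by (simp add: ac_simps)
      hence "b \<in> q" using eq by blast
      with b show False by simp
    qed
  qed
  define M' where "M' = {j + s * c | j s. j \<in> M}"
  have M'i: "is_ideal M'"
    unfolding is_ideal_def M'_def
  proof (intro conjI ballI allI)
    show "0 \<in> {j + s * c |j s. j \<in> M}" proof -
      have "(0::'a) = 0 + 0 * c" by simp
      thus ?thesis using idl_0[OF Mi] by blast
    qed
  next
    fix x y assume "x \<in> {j + s * c |j s. j \<in> M}" "y \<in> {j + s * c |j s. j \<in> M}"
    then obtain j1 s1 j2 s2 where "x = j1 + s1 * c" "j1 \<in> M" "y = j2 + s2 * c" "j2 \<in> M" by blast
    moreover have "j1 + j2 \<in> M" using Mi \<open>j1 \<in> M\<close> \<open>j2 \<in> M\<close> unfolding is_ideal_def by blast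
    moreover have "x + y = (j1 + j2) + (s1 + s2) * c" using \<open>x = j1 + s1 * c\<close> \<open>y = j2 + s2 * c\<close>
      by (simp add: algebra_simps)
    ultimately show "x + y \<in> {j + s * c |j s. j \<in> M}" by blast
  next
    fix r x assume "x \<in> {j + s * c |j s. j \<in> M}"
    then obtain j s where "x = j + s * c" "j \<in> M" by blast
    moreover have "r * j \<in> M" using Mi \<open>j \<in> M\<close> unfolding is_ideal_def by blast
    moreover have "r * x = r * j + (r * s) * c" using \<open>x = j + s * c\<close>
      by (simp add: algebra_simps)
    ultimately show "r * x \<in> {j + s * c |j s. j \<in> M}" by blast
  qed
  have MM': "M \<subseteq> M'"
  proof
    fix x assume "x \<in> M"
    moreover have "x = x + 0 * c" by simp
    ultimately show "x \<in> M'" unfolding M'_def by blast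
  qed
  have cM': "c \<in> M'"
  proof -
    have "c = 0 + 1 * c" by simp
    thus ?thesis unfolding M'_def using idl_0[OF Mi] by blast
  qed
  have "M' \<noteq> M" using cM' c by blast
  hence "M' \<notin> S" using Mmax MM' by blast
  hence finM': "finite (AssQ M')" using S_def M'i by blast
  have "AssQ M \<subseteq> insert q (AssQ M')"
  proof
    fix p assume "p \<in> AssQ M"
    then obtain y where pp: "prime_ideal p" and py: "p = {r. r * y \<in> M}" unfolding AssQ_def by blast
    show "p \<in> insert q (AssQ M')"
    proof (cases "\<forall>r. r \<notin> p \<longrightarrow> r * y \<notin> M'")
      case True
      have "{r. r * y \<in> M'} = p" using True py MM' by blast
      thus ?thesis using pp unfolding AssQ_def by blast
    next
      case False
      then obtain r where r: "r \<notin> p" and ry: "r * y \<in> M'" by blast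
      then obtain j s where j: "j \<in> M" and rys: "r * y = j + s * c" using M'_def by blast
      have p1: "p = {t. t * (r * y) \<in> M}"
        using prime_colon[OF pp r] py by (auto simp: ac_simps)
      have eq2: "t * (r * y) \<in> M \<longleftrightarrow> t * (s * c) \<in> M" for t
      proof -
        have tj: "t * j \<in> M" using Mi j unfolding is_ideal_def by blast
        have e: "t * (r * y) = t * j + t * (s * c)" by (simp add: rys algebra_simps)
        have a1: "\<And>u. u \<in> M \<Longrightarrow> t * j + u \<in> M" using idl_add[OF Mi tj] by blast
        have a2: "\<And>u. t * j + u \<in> M \<Longrightarrow> u \<in> M"
        proof -
          fix u assume "t * j + u \<in> M"
          moreover have "(-1) * (t * j) \<in> M" using idl_mult[OF Mi tj] by blast
          ultimately have "(t * j + u) + (-1) * (t * j) \<in> M" using idl_add[OF Mi] by blast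
          thus "u \<in> M" by simp
        qed
        show ?thesis unfolding e using a1 a2 by blast
      qed
      have p2: "p = {t. t * (s * c) \<in> M}" using p1 eq2 by blast
      have sq: "s \<notin> q"
      proof
        assume "s \<in> q"
        hence "1 * (s * c) \<in> M" using qdef by (simp add: ac_simps)
        hence "1 \<in> p" using p2 by blast
        have pi: "is_ideal p" using pp prime_ideal_def by blast
        have "x \<in> p" for x using idl_mult[OF pi \<open>1 \<in> p\<close>, of x] by simp
        thus False using pp unfolding prime_ideal_def by blast
      qed
      have "p = {t. t * s \<in> q}" using p2 qdef by (auto simp: ac_simps)
      also have "\<dots> = q" using prime_colon[OF qprime sq] .
      finally show ?thesis by simp
    qed
  qed
  with finM' Minf show False by (meson finite_insert finite_subset)
qed

lemma memKW: "u = k + w \<Longrightarrow> k \<in> K \<Longrightarrow> w \<in> S \<Longrightarrow> u \<in> {k + w |k w. k \<in> K \<and> w \<in> S}"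
  by blast

lemma B_finite:
  assumes N: "noetherian_cring TYPE('a::comm_ring_1)"
    and m: "module (scale :: 'a \<Rightarrow> 'b::ab_group_add \<Rightarrow> 'b)"
    and fin: "finite F" and K: "module.subspace scale K"
  shows "finite {p. prime_ideal p \<and> (\<exists>y\<in>module.span scale F. p = {r. scale r y \<in> K})}"
  using fin
proof (induction F rule: finite_induct)
  interpret m: module scale by (rule m)
  case empty
  have "{p. prime_ideal p \<and> (\<exists>y\<in>m.span {}. p = {r. scale r y \<in> K})} = {}"
  proof -
    have "{r. scale r y \<in> K} = UNIV" if "y \<in> m.span {}" for y
      using that m.subspace_0[OF K] by (simp add: m.span_empty)
    thus ?thesis unfolding prime_ideal_def by blast
  qed
  then show ?case by simp
next
  interpret m: module scale by (rule m)
  case (insert a F)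
  define K' where "K' = {k + w | k w. k \<in> K \<and> w \<in> m.span F}"
  have K': "m.subspace K'"
    unfolding m.subspace_def K'_def
  proof (intro conjI ballI allI)
    show "0 \<in> {k + w |k w. k \<in> K \<and> w \<in> m.span F}"
    proof -
      have "(0::'b) = 0 + 0" by simp
      from memKW[OF this m.subspace_0[OF K] m.span_zero] show ?thesis .
    qed
  next
    fix x y assume "x \<in> {k + w |k w. k \<in> K \<and> w \<in> m.span F}" "y \<in> {k + w |k w. k \<in> K \<and> w \<in> m.span F}"
    then obtain k1 w1 k2 w2 where "x = k1 + w1" "k1 \<in> K" "w1 \<in> m.span F" "y = k2 + w2" "k2 \<in> K" "w2 \<in> m.span F" by blast
    have e2: "k1 + k2 \<in> K" using m.subspace_add[OF K] \<open>k1 \<in> K\<close> \<open>k2 \<in> K\<close> by blast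
    have e3: "w1 + w2 \<in> m.span F" using m.span_add \<open>w1 \<in> m.span F\<close> \<open>w2 \<in> m.span F\<close> by blast
    have e1: "x + y = (k1 + k2) + (w1 + w2)" using \<open>x = k1 + w1\<close> \<open>y = k2 + w2\<close> by (simp add: algebra_simps)
    show "x + y \<in> {k + w |k w. k \<in> K \<and> w \<in> m.span F}" by (rule memKW[OF e1 e2 e3])
  next
    fix c x assume "x \<in> {k + w |k w. k \<in> K \<and> w \<in> m.span F}"
    then obtain k w where "x = k + w" "k \<in> K" "w \<in> m.span F" by blast
    have e2: "scale c k \<in> K" using m.subspace_scale[OF K \<open>k \<in> K\<close>] .
    have e3: "scale c w \<in> m.span F" using m.span_scale \<open>w \<in> m.span F\<close> by blast
    have e1: "scale c x = scale c k + scale c w" using \<open>x = k + w\<close> by (simp add: m.scale_right_distrib)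
    show "scale c x \<in> {k + w |k w. k \<in> K \<and> w \<in> m.span F}" by (rule memKW[OF e1 e2 e3])
  qed
  have KK': "K \<subseteq> K'"
  proof
    fix x assume xK: "x \<in> K"
    have e: "x = x + 0" by simp
    show "x \<in> K'" unfolding K'_def by (rule memKW[OF e xK m.span_zero])
  qed
  have FK': "m.span F \<subseteq> K'"
  proof
    fix x assume xF: "x \<in> m.span F"
    have e: "x = 0 + x" by simp
    show "x \<in> K'" unfolding K'_def by (rule memKW[OF e m.subspace_0[OF K] xF])
  qed
  define I where "I = {r. scale r a \<in> K'}"
  have Ii: "is_ideal I" unfolding I_def is_ideal_def
    using m.subspace_0[OF K'] m.subspace_add[OF K'] m.subspace_scale[OF K']
  proof (intro conjI ballI allI)
    show "0 \<in> {r. scale r a \<in> K'}" using m.subspace_0[OF K'] by simp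
  next
    fix x y assume "x \<in> {r. scale r a \<in> K'}" "y \<in> {r. scale r a \<in> K'}"
    thus "x + y \<in> {r. scale r a \<in> K'}" using m.subspace_add[OF K'] by (simp add: m.scale_left_distrib)
  next
    fix c x assume "x \<in> {r. scale r a \<in> K'}"
    hence "scale x a \<in> K'" by simp
    from m.subspace_scale[OF K' this] have "scale c (scale x a) \<in> K'" .
    thus "c * x \<in> {r. scale r a \<in> K'}" by (simp add: m.scale_scale)
  qed
  have "{p. prime_ideal p \<and> (\<exists>y\<in>m.span (insert a F). p = {r. scale r y \<in> K})}
        \<subseteq> AssQ I \<union> {p. prime_ideal p \<and> (\<exists>y\<in>m.span F. p = {r. scale r y \<in> K})}"
  proof
    fix p assume "p \<in> {p. prime_ideal p \<and> (\<exists>y\<in>m.span (insert a F). p = {r. scale r y \<in> K})}"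
    then obtain y where pp: "prime_ideal p" and y: "y \<in> m.span (insert a F)"
      and py: "p = {r. scale r y \<in> K}" by blast
    from y obtain c where z: "y - scale c a \<in> m.span F" using m.span_insert by blast
    define z where "z = y - scale c a"
    have yz: "y = scale c a + z" using z_def by simp
    show "p \<in> AssQ I \<union> {p. prime_ideal p \<and> (\<exists>y\<in>m.span F. p = {r. scale r y \<in> K})}"
    proof (cases "\<forall>r. r \<notin> p \<longrightarrow> scale r y \<notin> K'")
      case True
      have p1: "p = {r. scale r y \<in> K'}" using True py KK' by blast
      have "scale r y \<in> K' \<longleftrightarrow> (r * c) \<in> I" for r
      proof -
        have rz: "scale r z \<in> K'" using FK' m.span_scale z z_def by blast
        have e: "scale r y = scale (r * c) a + scale r z"
          by (simp add: yz m.scale_right_distrib m.scale_scale)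
        have "scale (r * c) a + scale r z \<in> K' \<longleftrightarrow> scale (r * c) a \<in> K'"
        proof
          assume "scale (r * c) a + scale r z \<in> K'"
          from m.subspace_diff[OF K' this rz] show "scale (r * c) a \<in> K'" by simp
        qed (rule m.subspace_add[OF K' _ rz])
        thus ?thesis unfolding I_def e by simp
      qed
      hence "p = {r. r * c \<in> I}" using p1 by blast
      thus ?thesis using pp unfolding AssQ_def by blast
    next
      case False
      then obtain r where r: "r \<notin> p" and ry: "scale r y \<in> K'" by blast
      then obtain k w where k: "k \<in> K" and w: "w \<in> m.span F" and rys: "scale r y = k + w"
        using K'_def by blast
      have "scale t (scale r y) \<in> K \<longleftrightarrow> t * r \<in> p" for t
        using py m.scale_scale[of t r y] by simp
      hence p1: "p = {t. scale t (scale r y) \<in> K}"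
        using prime_colon[OF pp r] by blast
      have "scale t (scale r y) \<in> K \<longleftrightarrow> scale t w \<in> K" for t
      proof -
        have tk: "scale t k \<in> K" using m.subspace_scale[OF K k] .
        have e: "scale t (scale r y) = scale t k + scale t w" by (simp add: rys m.scale_right_distrib)
        have "scale t k + scale t w \<in> K \<longleftrightarrow> scale t w \<in> K"
        proof
          assume "scale t k + scale t w \<in> K"
          from m.subspace_diff[OF K this tk] show "scale t w \<in> K" by simp
        qed (rule m.subspace_add[OF K tk])
        thus ?thesis unfolding e .
      qed
      hence "p = {t. scale t w \<in> K}" using p1 by blast
      thus ?thesis using pp w by blast
    qed
  qed
  moreover have "finite (AssQ I)" using AssQ_finite[OF N Ii] .
  moreover note insert.IH
  ultimately show ?case by (rule finite_subset[OF _ finite_UnI])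
qed

theorem lemma2p6:
  fixes scale :: "'a::comm_ring_1 \<Rightarrow> 'b::ab_group_add \<Rightarrow> 'b" and n :: nat
  assumes "noetherian_cring TYPE('a)"
    and "module scale"
    and "in_dim_less scale n"
  shows "finite {p \<in> Ass scale. dim_quot p \<ge> enat n}"
proof -
  interpret m: module scale by (rule assms(2))
  obtain F where F: "finite F"
    and d: "dim_supp (supp_quot scale (m.span F)) < ereal (real n)"
    using assms(3) unfolding in_dim_less_def by blast
  have "{p \<in> Ass scale. dim_quot p \<ge> enat n}
       \<subseteq> {p. prime_ideal p \<and> (\<exists>y\<in>m.span F. p = {r. scale r y \<in> {0}})}"
  proof
    fix p assume "p \<in> {p \<in> Ass scale. dim_quot p \<ge> enat n}"
    then obtain x where pp: "prime_ideal p" and px: "p = {r. scale r x = 0}"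
      and dp: "dim_quot p \<ge> enat n" unfolding Ass_def by blast
    have "p \<notin> supp_quot scale (m.span F)"
    proof
      assume "p \<in> supp_quot scale (m.span F)"
      hence "ereal_of_enat (dim_quot p) \<le> dim_supp (supp_quot scale (m.span F))"
        unfolding dim_supp_def by (rule SUP_upper)
      moreover have "ereal (real n) \<le> ereal_of_enat (dim_quot p)"
        using dp by (metis ereal_of_enat_le_iff ereal_of_enat_simps(1))
      ultimately show False using d by simp
    qed
    then obtain s where s: "s \<notin> p" and sx: "scale s x \<in> m.span F"
      using pp unfolding supp_quot_def by blast
    have "scale t (scale s x) \<in> {0} \<longleftrightarrow> t * s \<in> p" for t
      using px m.scale_scale[of t s x] by simp
    hence "p = {r. scale r (scale s x) \<in> {0}}"
      using prime_colon[OF pp s] by blast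
    thus "p \<in> {p. prime_ideal p \<and> (\<exists>y\<in>m.span F. p = {r. scale r y \<in> {0}})}"
      using pp sx by blast
  qed
  moreover have "finite {p. prime_ideal p \<and> (\<exists>y\<in>m.span F. p = {r. scale r y \<in> {0}})}"
  proof -
    have "m.subspace {0}" unfolding m.subspace_def by simp
    thus ?thesis using B_finite[OF assms(1) assms(2) F] by blast
  qed
  ultimately show ?thesis by (rule finite_subset)
qed

end
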